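(* Let $n\ge 2$ and let $M\in\mathcal{M}_{d\times d}(\mathbb{C})$ be a nonderogatory matrix with $M\neq 0$ and $M^2=0$. Let $\mathcal{A}$ be the set of all $\mathbf{T}=(T_{p-q})_{p,q=0}^{n-1}\in\mathcal{T}_{n,d}(\mathcal{P}(M))$ such that $T_j$ is noninvertible for every $j\neq 0$. Then $\mathcal{A}$ is a commutative algebra which is maximal among commutative algebras contained in $\mathcal{T}_{n,d}(\mathcal{P}(M))$, and there are no $A,B\in\mathcal{P}(M)$ such that $\mathcal{A}=\mathcal{F}_{A,B}^{\mathcal{P}(M)}$.
   Context: A matrix $M$ is nonderogatory if its minimal polynomial equals its characteristic polynomial. $\mathcal{P}(M)=\{p(M): p\text{ a complex polynomial}\}$ is the algebra generated by $M$. For positive integers $n,d$, $\mathcal{T}_{n,d}$ denotes the set of block Toeplitz matrices $\mathbf{T}=(T_{p-q})_{p,q=0}^{n-1}$: $nd\times nd$ complex matrices partitioned into $n\times n$ blocks of size $d\times d$, whose $(p,q)$ block is $T_{p-q}$ for some $T_{-(n-1)},\dots,T_{n-1}\in\mathcal{M}_{d\times d}(\mathbb{C})$. For a subalgebra $\mathcal{B}\subseteq\mathcal{M}_{d\times d}(\mathbb{C})$, $\mathcal{T}_{n,d}(\mathcal{B})$ is the set of $\mathbf{T}\in\mathcal{T}_{n,d}$ with all $T_j\in\mathcal{B}$. An algebra contained in a set of matrices is a subset that is a linear subspace closed under matrix multiplication. For $A,B\in\mathcal{M}_{d\times d}(\mathbb{C})$, $$\mathcal{F}_{A,B}^{\mathcal{B}}=\{(T_{p-q})_{p,q=0}^{n-1}\in\mathcal{T}_{n,d}(\mathcal{B})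 : AT_j=BT_{j-n}\text{ for } j=1,2,\dots,n-1\}.$$ *)

theory Defs
  imports "Jordan_Normal_Form.Char_Poly"
begin

fun mat_poly_eval_list :: "'a::comm_ring_1 mat \<Rightarrow> 'a list \<Rightarrow> 'a mat" where
  "mat_poly_eval_list M [] = 0\<^sub>m (dim_row M) (dim_row M)"
| "mat_poly_eval_list M (c # cs) = c \<cdot>\<^sub>m 1\<^sub>m (dim_row M) + M * mat_poly_eval_list M cs"

definition mat_poly_eval :: "'a::comm_ring_1 poly \<Rightarrow> 'a mat \<Rightarrow> 'a mat" where
  "mat_poly_eval p M = mat_poly_eval_list M (coeffs p)"

definition is_minimal_poly :: "'a::field mat \<Rightarrow> 'a poly \<Rightarrow> bool" where
  "is_minimal_poly M p \<longleftrightarrow> monic p \<and> mat_poly_eval p M = 0\<^sub>m (dim_row M) (dim_row M) \<and>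
     (\<forall>q. q \<noteq> 0 \<and> mat_poly_eval q M = 0\<^sub>m (dim_row M) (dim_row M) \<longrightarrow> degree p \<le> degree q)"

definition nonderogatory :: "'a::field mat \<Rightarrow> bool" where
  "nonderogatory M \<longleftrightarrow> is_minimal_poly M (char_poly M)"

definition poly_algebra :: "'a::comm_ring_1 mat \<Rightarrow> 'a mat set" where
  "poly_algebra M = {mat_poly_eval p M | p. True}"

(* block Toeplitz matrix (T_{p-q})_{p,q=0}^{n-1} with d x d blocks, as an nd x nd matrix;
   row index i lies in block i div d, at position i mod d inside the block *)
definition block_toeplitz :: "nat \<Rightarrow> nat \<Rightarrow> (int \<Rightarrow> 'a mat) \<Rightarrow> 'a mat" where
  "block_toeplitz n d T = mat (n * d) (n * d)
     (\<lambda>(i, j). T (int (i div d) - int (j div d)) $$ (i mod d, j mod d))"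

definition toeplitz_set :: "nat \<Rightarrow> nat \<Rightarrow> 'a mat set \<Rightarrow> 'a mat set" where
  "toeplitz_set n d B = {block_toeplitz n d T | T.
     \<forall>j::int. \<bar>j\<bar> < int n \<longrightarrow> T j \<in> carrier_mat d d \<and> T j \<in> B}"

definition F_set :: "nat \<Rightarrow> nat \<Rightarrow> 'a::semiring_0 mat set \<Rightarrow> 'a mat \<Rightarrow> 'a mat \<Rightarrow> 'a mat set" where
  "F_set n d B A B' = {block_toeplitz n d T | T.
     (\<forall>j::int. \<bar>j\<bar> < int n \<longrightarrow> T j \<in> carrier_mat d d \<and> T j \<in> B) \<and>
     (\<forall>j::int. 1 \<le> j \<and> j \<le> int n - 1 \<longrightarrow> A * T j = B' * T (j - int n))}"

definition algebra_in :: "nat \<Rightarrow> 'a::comm_ring_1 mat set \<Rightarrow> 'a mat set \<Rightarrow> bool" where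
  "algebra_in N S C \<longleftrightarrow> C \<subseteq> S \<and> 0\<^sub>m N N \<in> C \<and>
     (\<forall>X\<in>C. \<forall>Y\<in>C. X + Y \<in> C \<and> X * Y \<in> C) \<and>
     (\<forall>c. \<forall>X\<in>C. c \<cdot>\<^sub>m X \<in> C)"

definition comm_algebra_in :: "nat \<Rightarrow> 'a::comm_ring_1 mat set \<Rightarrow> 'a mat set \<Rightarrow> bool" where
  "comm_algebra_in N S C \<longleftrightarrow> algebra_in N S C \<and> (\<forall>X\<in>C. \<forall>Y\<in>C. X * Y = Y * X)"

end

theory Submission imports Defs begin

lemma pm_mult:
  assumes M: "M \<in> carrier_mat d d" and MM: "M * M = 0\<^sub>m d d"
  shows "(a \<cdot>\<^sub>m 1\<^sub>m d + b \<cdot>\<^sub>m M) * (c \<cdot>\<^sub>m 1\<^sub>m d + e \<cdot>\<^sub>m M)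
     = (a * c) \<cdot>\<^sub>m 1\<^sub>m d + (a * e + b * c) \<cdot>\<^sub>m (M::'a::comm_ring_1 mat)"
proof -
  have c1: "a \<cdot>\<^sub>m 1\<^sub>m d \<in> carrier_mat d d" "b \<cdot>\<^sub>m M \<in> carrier_mat d d"
     "c \<cdot>\<^sub>m 1\<^sub>m d \<in> carrier_mat d d" "e \<cdot>\<^sub>m M \<in> carrier_mat d d" using M by auto
  have "(a \<cdot>\<^sub>m 1\<^sub>m d + b \<cdot>\<^sub>m M) * (c \<cdot>\<^sub>m 1\<^sub>m d + e \<cdot>\<^sub>m M)
     = (a \<cdot>\<^sub>m 1\<^sub>m d) * (c \<cdot>\<^sub>m 1\<^sub>m d + e \<cdot>\<^sub>m M) + (b \<cdot>\<^sub>m M) * (c \<cdot>\<^sub>m 1\<^sub>m d + e \<cdot>\<^sub>m M)"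
    using c1 by (simp add: add_mult_distrib_mat[of _ d d _ _ d])
  also have "\<dots> = ((a \<cdot>\<^sub>m 1\<^sub>m d) * (c \<cdot>\<^sub>m 1\<^sub>m d) + (a \<cdot>\<^sub>m 1\<^sub>m d) * (e \<cdot>\<^sub>m M))
      + ((b \<cdot>\<^sub>m M) * (c \<cdot>\<^sub>m 1\<^sub>m d) + (b \<cdot>\<^sub>m M) * (e \<cdot>\<^sub>m M))"
    using c1 by (simp add: mult_add_distrib_mat[of _ d d _ d])
  also have "(a \<cdot>\<^sub>m 1\<^sub>m d) * (c \<cdot>\<^sub>m 1\<^sub>m d) = (a*c) \<cdot>\<^sub>m 1\<^sub>m d"
    by (rule eq_matI) auto
  also have "(a \<cdot>\<^sub>m 1\<^sub>m d) * (e \<cdot>\<^sub>m M) = (a*e) \<cdot>\<^sub>m M"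
    using M by (auto intro!: eq_matI simp: mult_smult_distrib[of _ d d _ d] mult_smult_assoc_mat[of _ d d _ d])
  also have "(b \<cdot>\<^sub>m M) * (c \<cdot>\<^sub>m 1\<^sub>m d) = (b*c) \<cdot>\<^sub>m M"
    using M by (auto intro!: eq_matI simp: mult_smult_distrib[of _ d d _ d] mult_smult_assoc_mat[of _ d d _ d])
  also have "(b \<cdot>\<^sub>m M) * (e \<cdot>\<^sub>m M) = 0\<^sub>m d d"
    using M MM by (simp add: mult_smult_distrib[of _ d d _ d] mult_smult_assoc_mat[of _ d d _ d])
  finally show ?thesis using M
    by (auto intro!: eq_matI simp: algebra_simps)
qed

lemma eval_list_PM:
  assumes M: "M \<in> carrier_mat d d" and MM: "M * M = 0\<^sub>m d d"
  shows "mat_poly_eval_list M cs = nth_default 0 cs 0 \<cdot>\<^sub>m 1\<^sub>m d + nth_default 0 cs 1 \<cdot>\<^sub>m M"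
proof (induction cs)
  case Nil
  then show ?case using M by (auto intro!: eq_matI)
next
  case (Cons c cs)
  have "M * (nth_default 0 cs 0 \<cdot>\<^sub>m 1\<^sub>m d + nth_default 0 cs 1 \<cdot>\<^sub>m M)
     = nth_default 0 cs 0 \<cdot>\<^sub>m M"
  proof -
    have h: "M = 0 \<cdot>\<^sub>m 1\<^sub>m d + 1 \<cdot>\<^sub>m M" using M by (auto intro!: eq_matI)
    have h2: "0 \<cdot>\<^sub>m 1\<^sub>m d + x \<cdot>\<^sub>m M = x \<cdot>\<^sub>m M" for x using M by (auto intro!: eq_matI)
    show ?thesis
      apply (subst (1) h)
      using pm_mult[OF M MM, of 0 1 "nth_default 0 cs 0" "nth_default 0 cs 1"] h2 by simp
  qed
  then show ?case using Cons M by (simp add: nth_default_Cons)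
qed

lemma PM_char:
  assumes M: "M \<in> carrier_mat d d" and MM: "M * M = 0\<^sub>m d d"
  shows "X \<in> poly_algebra M \<longleftrightarrow> (\<exists>a b. X = a \<cdot>\<^sub>m 1\<^sub>m d + b \<cdot>\<^sub>m M)"
proof
  assume "X \<in> poly_algebra M"
  then obtain p where "X = mat_poly_eval p M" unfolding poly_algebra_def by auto
  then show "\<exists>a b. X = a \<cdot>\<^sub>m 1\<^sub>m d + b \<cdot>\<^sub>m M"
    using eval_list_PM[OF M MM] unfolding mat_poly_eval_def by blast
next
  assume "\<exists>a b. X = a \<cdot>\<^sub>m 1\<^sub>m d + b \<cdot>\<^sub>m M"
  then obtain a b where X: "X = a \<cdot>\<^sub>m 1\<^sub>m d + b \<cdot>\<^sub>m M" by auto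
  have "mat_poly_eval [:a, b:] M = X"
    unfolding mat_poly_eval_def eval_list_PM[OF M MM] nth_default_coeffs_eq X by simp
  then show "X \<in> poly_algebra M" unfolding poly_algebra_def by blast
qed

lemma sum_split_blocks:
  fixes f :: "nat \<Rightarrow> 'b::comm_monoid_add"
  shows "(\<Sum>l<n*d. f l) = (\<Sum>r<n. \<Sum>c<d. f (r*d+c))"
proof (induction n)
  case 0
  then show ?case by simp
next
  case (Suc n)
  have "(\<Sum>l<Suc n*d. f l) = (\<Sum>l\<in>{0..<n*d}. f l) + (\<Sum>l\<in>{n*d..<n*d+d}. f l)"
    by (simp add: sum.atLeastLessThan_concat add.commute lessThan_atLeast0)
  also have "(\<Sum>l\<in>{n*d..<n*d+d}. f l) = (\<Sum>c<d. f (n*d+c))"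
    using sum.shift_bounds_nat_ivl[of f 0 "n*d" d]
    by (simp add: lessThan_atLeast0 add.commute)
  finally show ?case using Suc by (simp add: lessThan_atLeast0)
qed

lemma div_lt: "i < n * d \<Longrightarrow> i div d < (n::nat)"
  by (metis less_mult_imp_div_less)

lemma mod_lt: "i < n * d \<Longrightarrow> i mod d < (d::nat)"
  by (metis mod_less_divisor mult_0_right not_less_zero gr0I)

lemma bt_dims[simp]: "dim_row (block_toeplitz n d T) = n * d" "dim_col (block_toeplitz n d T) = n * d"
  "block_toeplitz n d T \<in> carrier_mat (n*d) (n*d)"
  unfolding block_toeplitz_def by auto

lemma bt_index: "i < n * d \<Longrightarrow> k < n * d \<Longrightarrow>
  block_toeplitz n d T $$ (i, k) = T (int (i div d) - int (k div d)) $$ (i mod d, k mod d)"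
  unfolding block_toeplitz_def by simp

lemma bt_cong: assumes "\<And>j. \<bar>j\<bar> < int n \<Longrightarrow> T j = S j"
  shows "block_toeplitz n d T = block_toeplitz n d S"
proof (rule eq_matI)
  fix i k assume "i < dim_row (block_toeplitz n d S)" "k < dim_col (block_toeplitz n d S)"
  then have i: "i < n*d" and k: "k < n*d" by auto
  have "\<bar>int (i div d) - int (k div d)\<bar> < int n" using div_lt[OF i] div_lt[OF k] by auto
  then show "block_toeplitz n d T $$ (i, k) = block_toeplitz n d S $$ (i, k)"
    using assms bt_index[OF i k] by (simp add: bt_index[OF i k])
qed auto

lemma bt_add: assumes "\<And>j. \<bar>j\<bar> < int n \<Longrightarrow> T j \<in> carrier_mat d d \<and> S j \<in> carrier_mat d d"
  shows "block_toeplitz n d T + block_toeplitz n d S = block_toeplitz n d (\<lambda>j. T j + S j)"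
proof (rule eq_matI)
  fix i k assume "i < dim_row (block_toeplitz n d (\<lambda>j. T j + S j))" "k < dim_col (block_toeplitz n d (\<lambda>j. T j + S j))"
  then have i: "i < n*d" and k: "k < n*d" by auto
  have "\<bar>int (i div d) - int (k div d)\<bar> < int n" using div_lt[OF i] div_lt[OF k] by auto
  then show "(block_toeplitz n d T + block_toeplitz n d S) $$ (i, k) = block_toeplitz n d (\<lambda>j. T j + S j) $$ (i, k)"
    using assms[of "int (i div d) - int (k div d)"] i k mod_lt[OF i] mod_lt[OF k] by (auto simp add: bt_index)
qed auto

lemma bt_smult: assumes "\<And>j. \<bar>j\<bar> < int n \<Longrightarrow> T j \<in> carrier_mat d d"
  shows "c \<cdot>\<^sub>m block_toeplitz n d T = block_toeplitz n d (\<lambda>j. c \<cdot>\<^sub>m T j)"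
proof (rule eq_matI)
  fix i k assume "i < dim_row (block_toeplitz n d (\<lambda>j. c \<cdot>\<^sub>m T j))" "k < dim_col (block_toeplitz n d (\<lambda>j. c \<cdot>\<^sub>m T j))"
  then have i: "i < n*d" and k: "k < n*d" by auto
  have "\<bar>int (i div d) - int (k div d)\<bar> < int n" using div_lt[OF i] div_lt[OF k] by auto
  then show "(c \<cdot>\<^sub>m block_toeplitz n d T) $$ (i, k) = block_toeplitz n d (\<lambda>j. c \<cdot>\<^sub>m T j) $$ (i, k)"
    using assms[of "int (i div d) - int (k div d)"] i k mod_lt[OF i] mod_lt[OF k] by (simp add: bt_index)
qed auto

lemma bt_zero: "block_toeplitz n d (\<lambda>j. 0\<^sub>m d d) = 0\<^sub>m (n*d) (n*d)"
  by (rule eq_matI) (auto simp: bt_index mod_lt)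

lemma blk: "p < (n::nat) \<Longrightarrow> a < d \<Longrightarrow> p*d+a < n*d"
proof -
  assume "p < n" "a < d"
  then have "p*d+a < (p+1)*d" by simp
  moreover have "(p+1)*d \<le> n*d" using \<open>p < n\<close> by (intro mult_le_mono1) simp
  ultimately show ?thesis by linarith
qed

lemma bt_inj: assumes "0 < d" "block_toeplitz n d T = block_toeplitz n d S"
  "T j \<in> carrier_mat d d" "S j \<in> carrier_mat d d" "\<bar>j\<bar> < int n"
  shows "T j = S j"
proof (rule eq_matI)
  define p where "p = nat (max j 0)"
  define q where "q = nat (int p - j)"
  have p: "p < n" and q: "q < n" and pq: "int p - int q = j" using assms(5) unfolding p_def q_def by auto
  fix a b assume "a < dim_row (S j)" "b < dim_col (S j)"
  then have a: "a < d" and b: "b < d" using assms by auto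
  have i: "p*d+a < n*d" using blk[OF p a] .
  have k: "q*d+b < n*d" using blk[OF q b] .
  have "block_toeplitz n d T $$ (p*d+a, q*d+b) = block_toeplitz n d S $$ (p*d+a, q*d+b)" using assms by simp
  then show "T j $$ (a, b) = S j $$ (a, b)"
    using a b pq by (simp add: bt_index[OF i k])
qed (use assms in auto)

lemma bt_mult_index:
  assumes car: "\<And>j. \<bar>j\<bar> < int n \<Longrightarrow> T j \<in> carrier_mat d d \<and> S j \<in> carrier_mat d d"
    and i: "i < n*d" and k: "k < n*d"
  shows "(block_toeplitz n d T * block_toeplitz n d S) $$ (i,k)
    = (\<Sum>r<n. (T (int (i div d) - int r) * S (int r - int (k div d))) $$ (i mod d, k mod d))"
proof -
  have "(block_toeplitz n d T * block_toeplitz n d S) $$ (i,k)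
     = (\<Sum>l<n*d. block_toeplitz n d T $$ (i,l) * block_toeplitz n d S $$ (l,k))"
    using i k by (simp add: scalar_prod_def lessThan_atLeast0)
  also have "\<dots> = (\<Sum>r<n. \<Sum>c<d. block_toeplitz n d T $$ (i,r*d+c) * block_toeplitz n d S $$ (r*d+c,k))"
    by (rule sum_split_blocks)
  also have "\<dots> = (\<Sum>r<n. (T (int (i div d) - int r) * S (int r - int (k div d))) $$ (i mod d, k mod d))"
  proof (rule sum.cong[OF refl])
    fix r assume r: "r \<in> {..<n}"
    have c1: "\<bar>int (i div d) - int r\<bar> < int n" "\<bar>int r - int (k div d)\<bar> < int n"
      using div_lt[OF i] div_lt[OF k] r by auto
    have "(T (int (i div d) - int r) * S (int r - int (k div d))) $$ (i mod d, k mod d)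
      = (\<Sum>c<d. T (int (i div d) - int r) $$ (i mod d, c) * S (int r - int (k div d)) $$ (c, k mod d))"
      using car[OF c1(1)] car[OF c1(2)] mod_lt[OF i] mod_lt[OF k]
      by (auto simp: scalar_prod_def lessThan_atLeast0)
    also have "\<dots> = (\<Sum>c<d. block_toeplitz n d T $$ (i,r*d+c) * block_toeplitz n d S $$ (r*d+c,k))"
    proof (rule sum.cong[OF refl])
      fix c assume c: "c \<in> {..<d}"
      then have l: "r*d+c < n*d" using blk r by auto
      have "(r*d+c) div d = r" "(r*d+c) mod d = c" using c by auto
      then show "T (int (i div d) - int r) $$ (i mod d, c) * S (int r - int (k div d)) $$ (c, k mod d)
        = block_toeplitz n d T $$ (i,r*d+c) * block_toeplitz n d S $$ (r*d+c,k)"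
        by (simp add: bt_index[OF i l] bt_index[OF l k])
    qed
    finally show "(\<Sum>c<d. block_toeplitz n d T $$ (i,r*d+c) * block_toeplitz n d S $$ (r*d+c,k))
      = (T (int (i div d) - int r) * S (int r - int (k div d))) $$ (i mod d, k mod d)" by simp
  qed
  finally show ?thesis .
qed

lemma bt_mult_special:
  assumes car: "\<And>j. \<bar>j\<bar> < int n \<Longrightarrow> T j \<in> carrier_mat d d \<and> S j \<in> carrier_mat d d"
    and van: "\<And>j k. \<bar>j\<bar> < int n \<Longrightarrow> \<bar>k\<bar> < int n \<Longrightarrow> j \<noteq> 0 \<Longrightarrow> k \<noteq> 0 \<Longrightarrow> T j * S k = 0\<^sub>m d d"
  shows "block_toeplitz n d T * block_toeplitz n d S
     = block_toeplitz n d (\<lambda>j. if j = 0 then T 0 * S 0 else T 0 * S j + T j * S 0)"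
proof (rule eq_matI)
  fix i k assume "i < dim_row (block_toeplitz n d (\<lambda>j. if j = 0 then T 0 * S 0 else T 0 * S j + T j * S 0))"
     "k < dim_col (block_toeplitz n d (\<lambda>j. if j = 0 then T 0 * S 0 else T 0 * S j + T j * S 0))"
  then have i: "i < n*d" and k: "k < n*d" by auto
  define p where "p = i div d"
  define q where "q = k div d"
  define a where "a = i mod d"
  define b where "b = k mod d"
  have p: "p < n" and q: "q < n" and a: "a < d" and b: "b < d"
    using div_lt[OF i] div_lt[OF k] mod_lt[OF i] mod_lt[OF k] unfolding p_def q_def a_def b_def by auto
  have n0: "\<bar>0::int\<bar> < int n" using p by auto
  define f where "f r = (T (int p - int r) * S (int r - int q)) $$ (a, b)" for r
  have lhs: "(block_toeplitz n d T * block_toeplitz n d S) $$ (i,k) = (\<Sum>r<n. f r)"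
    unfolding f_def p_def q_def a_def b_def by (rule bt_mult_index[OF car i k])
  have z: "f r = 0" if "r \<in> {..<n} - {p,q}" for r
  proof -
    have "\<bar>int p - int r\<bar> < int n" "\<bar>int r - int q\<bar> < int n" "int p - int r \<noteq> 0" "int r - int q \<noteq> 0"
      using that p q by auto
    then show ?thesis unfolding f_def using van a b by simp
  qed
  have sub: "{p,q} \<subseteq> {..<n}" using p q by auto
  have "(\<Sum>r<n. f r) = (\<Sum>r\<in>{p,q}. f r)"
    by (rule sum.mono_neutral_right[OF _ sub]) (use z in auto)
  also have "\<dots> = block_toeplitz n d (\<lambda>j. if j = 0 then T 0 * S 0 else T 0 * S j + T j * S 0) $$ (i,k)"
  proof (cases "p = q")
    case True
    then show ?thesis unfolding f_def by (simp add: bt_index[OF i k] p_def q_def a_def b_def)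
  next
    case False
    have c: "\<bar>int p - int q\<bar> < int n" using p q by auto
    have "(\<Sum>r\<in>{p,q}. f r) = f p + f q" using False by simp
    also have "\<dots> = (T 0 * S (int p - int q) + T (int p - int q) * S 0) $$ (a,b)"
      unfolding f_def using car[OF c] car[OF n0] a b by auto
    finally show ?thesis using False by (simp add: bt_index[OF i k] p_def q_def a_def b_def)
  qed
  finally show "(block_toeplitz n d T * block_toeplitz n d S) $$ (i,k) =
     block_toeplitz n d (\<lambda>j. if j = 0 then T 0 * S 0 else T 0 * S j + T j * S 0) $$ (i,k)"
    using lhs by simp
qed auto

context
  fixes M :: "complex mat" and d :: nat
  assumes M: "M \<in> carrier_mat d d" and MM: "M * M = 0\<^sub>m d d"
begin

lemma pm_add: "(a \<cdot>\<^sub>m 1\<^sub>m d + b \<cdot>\<^sub>m M) + (c \<cdot>\<^sub>m 1\<^sub>m d + e \<cdot>\<^sub>m M) = (a+c) \<cdot>\<^sub>m 1\<^sub>m d + (b+e) \<cdot>\<^sub>m M"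
  using M by (auto intro!: eq_matI simp: algebra_simps)

lemma pm_smult: "c \<cdot>\<^sub>m (a \<cdot>\<^sub>m 1\<^sub>m d + b \<cdot>\<^sub>m M) = (c*a) \<cdot>\<^sub>m 1\<^sub>m d + (c*b) \<cdot>\<^sub>m M"
  using M by (auto intro!: eq_matI simp: algebra_simps)

lemma pm_zero: "0 \<cdot>\<^sub>m 1\<^sub>m d + 0 \<cdot>\<^sub>m M = 0\<^sub>m d d"
  using M by (auto intro!: eq_matI)

lemma pm_M: "0 \<cdot>\<^sub>m 1\<^sub>m d + 1 \<cdot>\<^sub>m M = M"
  using M by (auto intro!: eq_matI)

lemma pm_carrier: "a \<cdot>\<^sub>m 1\<^sub>m d + b \<cdot>\<^sub>m M \<in> carrier_mat d d"
  using M by auto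

lemma pm_multM: "(a \<cdot>\<^sub>m 1\<^sub>m d + b \<cdot>\<^sub>m M) * M = a \<cdot>\<^sub>m M"
proof -
  have "(a \<cdot>\<^sub>m 1\<^sub>m d + b \<cdot>\<^sub>m M) * M = (a \<cdot>\<^sub>m 1\<^sub>m d + b \<cdot>\<^sub>m M) * (0 \<cdot>\<^sub>m 1\<^sub>m d + 1 \<cdot>\<^sub>m M)"
    by (simp add: pm_M)
  also have "\<dots> = 0 \<cdot>\<^sub>m 1\<^sub>m d + a \<cdot>\<^sub>m M" by (simp add: pm_mult[OF M MM])
  also have "\<dots> = a \<cdot>\<^sub>m M" using M by (auto intro!: eq_matI)
  finally show ?thesis .
qed

lemma Mpm_mult: "M * (a \<cdot>\<^sub>m 1\<^sub>m d + b \<cdot>\<^sub>m M) = a \<cdot>\<^sub>m M"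
proof -
  have "M * (a \<cdot>\<^sub>m 1\<^sub>m d + b \<cdot>\<^sub>m M) = (0 \<cdot>\<^sub>m 1\<^sub>m d + 1 \<cdot>\<^sub>m M) * (a \<cdot>\<^sub>m 1\<^sub>m d + b \<cdot>\<^sub>m M)"
    by (simp add: pm_M)
  also have "\<dots> = 0 \<cdot>\<^sub>m 1\<^sub>m d + a \<cdot>\<^sub>m M" by (simp add: pm_mult[OF M MM])
  also have "\<dots> = a \<cdot>\<^sub>m M" using M by (auto intro!: eq_matI)
  finally show ?thesis .
qed

lemma pm_invertible:
  assumes M0: "M \<noteq> 0\<^sub>m d d"
  shows "invertible_mat (a \<cdot>\<^sub>m 1\<^sub>m d + b \<cdot>\<^sub>m M) \<longleftrightarrow> a \<noteq> 0"
proof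
  assume inv: "invertible_mat (a \<cdot>\<^sub>m 1\<^sub>m d + b \<cdot>\<^sub>m M)"
  show "a \<noteq> 0"
  proof
    assume a0: "a = 0"
    from inv obtain B where B1: "(a \<cdot>\<^sub>m 1\<^sub>m d + b \<cdot>\<^sub>m M) * B = 1\<^sub>m d"
      and B2: "B * (a \<cdot>\<^sub>m 1\<^sub>m d + b \<cdot>\<^sub>m M) = 1\<^sub>m (dim_row B)"
      unfolding invertible_mat_def inverts_mat_def using M by auto
    have "dim_col B = d" using B1 by (metis index_mult_mat(3) index_one_mat(3))
    moreover have "dim_row B = d" using B2 M by (metis index_mult_mat(3) index_one_mat(3) index_add_mat(3) index_smult_mat(3) carrier_matD(2))
    ultimately have Bc: "B \<in> carrier_mat d d" by auto
    have "M = (B * (a \<cdot>\<^sub>m 1\<^sub>m d + b \<cdot>\<^sub>m M)) * M" using B2 Bc M by simp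
    also have "\<dots> = B * ((a \<cdot>\<^sub>m 1\<^sub>m d + b \<cdot>\<^sub>m M) * M)" by (rule assoc_mult_mat[OF Bc pm_carrier M])
    also have "\<dots> = 0\<^sub>m d d" using a0 Bc M by (auto simp add: pm_multM intro!: eq_matI)
    finally show False using M0 by simp
  qed
next
  assume a0: "a \<noteq> 0"
  let ?B = "(1/a) \<cdot>\<^sub>m 1\<^sub>m d + (- b/(a*a)) \<cdot>\<^sub>m M"
  have e1: "(a \<cdot>\<^sub>m 1\<^sub>m d + b \<cdot>\<^sub>m M) * ?B = 1\<^sub>m d"
    unfolding pm_mult[OF M MM] using a0 M by (auto intro!: eq_matI simp: field_simps)
  have e2: "?B * (a \<cdot>\<^sub>m 1\<^sub>m d + b \<cdot>\<^sub>m M) = 1\<^sub>m d"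
    unfolding pm_mult[OF M MM] using a0 M by (auto intro!: eq_matI simp: field_simps)
  show "invertible_mat (a \<cdot>\<^sub>m 1\<^sub>m d + b \<cdot>\<^sub>m M)"
    unfolding invertible_mat_def inverts_mat_def square_mat.simps using e1 e2 M
    by (intro conjI exI[of _ ?B]) auto
qed

end

lemma sum_delta_int: "(\<Sum>r<n. if int r = z then g else 0) = (if 0 \<le> z \<and> z < int n then g else (0::'b::comm_monoid_add))"
proof -
  have "(\<Sum>r<n. if int r = z then g else 0) = (\<Sum>r<n. if r = nat z \<and> 0 \<le> z then g else 0)"
    by (rule sum.cong) auto
  also have "\<dots> = (if 0 \<le> z \<and> z < int n then g else 0)"
    by (cases "0 \<le> z") (auto simp: sum.delta)
  finally show ?thesis .
qed

context
  fixes M :: "complex mat" and d n :: nat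
  assumes M: "M \<in> carrier_mat d d" and MM: "M * M = 0\<^sub>m d d" and M0: "M \<noteq> 0\<^sub>m d d"
begin

lemma memA:
  "X \<in> {block_toeplitz n d T | T.
             (\<forall>j::int. \<bar>j\<bar> < int n \<longrightarrow> T j \<in> carrier_mat d d \<and> T j \<in> poly_algebra M) \<and>
             (\<forall>j::int. \<bar>j\<bar> < int n \<and> j \<noteq> 0 \<longrightarrow> \<not> invertible_mat (T j))}
   \<longleftrightarrow> (\<exists>\<alpha> \<beta>. X = block_toeplitz n d (\<lambda>j. \<alpha> j \<cdot>\<^sub>m 1\<^sub>m d + \<beta> j \<cdot>\<^sub>m M) \<and> (\<forall>j. j \<noteq> 0 \<longrightarrow> \<alpha> j = 0))"
  (is "X \<in> ?S \<longleftrightarrow> ?R")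
proof
  assume "X \<in> ?S"
  then obtain T where X: "X = block_toeplitz n d T"
    and T1: "\<And>j. \<bar>j\<bar> < int n \<Longrightarrow> T j \<in> carrier_mat d d \<and> T j \<in> poly_algebra M"
    and T2: "\<And>j. \<bar>j\<bar> < int n \<Longrightarrow> j \<noteq> 0 \<Longrightarrow> \<not> invertible_mat (T j)" by auto
  have "\<forall>j. \<exists>ab. (\<bar>j\<bar> < int n \<longrightarrow> T j = fst ab \<cdot>\<^sub>m 1\<^sub>m d + snd ab \<cdot>\<^sub>m M) \<and> (j \<noteq> 0 \<longrightarrow> fst ab = 0)"
  proof
    fix j
    show "\<exists>ab. (\<bar>j\<bar> < int n \<longrightarrow> T j = fst ab \<cdot>\<^sub>m 1\<^sub>m d + snd ab \<cdot>\<^sub>m M) \<and> (j \<noteq> 0 \<longrightarrow> fst ab = 0)"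
    proof (cases "\<bar>j\<bar> < int n")
      case True
      then obtain a b where ab: "T j = a \<cdot>\<^sub>m 1\<^sub>m d + b \<cdot>\<^sub>m M" using T1 PM_char[OF M MM] by blast
      have "j \<noteq> 0 \<longrightarrow> a = 0" using T2[OF True] pm_invertible[OF M MM M0, of a b] ab by auto
      then show ?thesis using ab by (intro exI[of _ "(a,b)"]) auto
    next
      case False
      then show ?thesis by (intro exI[of _ "(0,0)"]) auto
    qed
  qed
  then obtain f where f: "\<And>j. (\<bar>j\<bar> < int n \<longrightarrow> T j = fst (f j) \<cdot>\<^sub>m 1\<^sub>m d + snd (f j) \<cdot>\<^sub>m M) \<and> (j \<noteq> 0 \<longrightarrow> fst (f j) = 0)"
    by metis
  have "X = block_toeplitz n d (\<lambda>j. fst (f j) \<cdot>\<^sub>m 1\<^sub>m d + snd (f j) \<cdot>\<^sub>m M)"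
    unfolding X by (rule bt_cong) (use f in auto)
  then show ?R using f by (intro exI[of _ "\<lambda>j. fst (f j)"] exI[of _ "\<lambda>j. snd (f j)"]) auto
next
  assume ?R
  then obtain \<alpha> \<beta> where X: "X = block_toeplitz n d (\<lambda>j. \<alpha> j \<cdot>\<^sub>m 1\<^sub>m d + \<beta> j \<cdot>\<^sub>m M)"
    and a: "\<And>j. j \<noteq> 0 \<Longrightarrow> \<alpha> j = 0" by blast
  have "\<forall>j::int. \<bar>j\<bar> < int n \<longrightarrow> (\<lambda>j. \<alpha> j \<cdot>\<^sub>m 1\<^sub>m d + \<beta> j \<cdot>\<^sub>m M) j \<in> carrier_mat d d \<and> (\<lambda>j. \<alpha> j \<cdot>\<^sub>m 1\<^sub>m d + \<beta> j \<cdot>\<^sub>m M) j \<in> poly_algebra M"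
    using pm_carrier[OF M MM] PM_char[OF M MM] by auto
  moreover have "\<forall>j::int. \<bar>j\<bar> < int n \<and> j \<noteq> 0 \<longrightarrow> \<not> invertible_mat ((\<lambda>j. \<alpha> j \<cdot>\<^sub>m 1\<^sub>m d + \<beta> j \<cdot>\<^sub>m M) j)"
    using pm_invertible[OF M MM M0] a by auto
  ultimately show "X \<in> ?S" unfolding X by blast
qed

lemma memT:
  "X \<in> toeplitz_set n d (poly_algebra M)
   \<longleftrightarrow> (\<exists>\<alpha> \<beta>. X = block_toeplitz n d (\<lambda>j. \<alpha> j \<cdot>\<^sub>m 1\<^sub>m d + \<beta> j \<cdot>\<^sub>m M))"
proof
  assume "X \<in> toeplitz_set n d (poly_algebra M)"
  then obtain T where X: "X = block_toeplitz n d T"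
    and T1: "\<And>j. \<bar>j\<bar> < int n \<Longrightarrow> T j \<in> carrier_mat d d \<and> T j \<in> poly_algebra M"
    unfolding toeplitz_set_def by auto
  have "\<forall>j. \<exists>ab. (\<bar>j\<bar> < int n \<longrightarrow> T j = fst ab \<cdot>\<^sub>m 1\<^sub>m d + snd ab \<cdot>\<^sub>m M)"
  proof
    fix j
    show "\<exists>ab. (\<bar>j\<bar> < int n \<longrightarrow> T j = fst ab \<cdot>\<^sub>m 1\<^sub>m d + snd ab \<cdot>\<^sub>m M)"
    proof (cases "\<bar>j\<bar> < int n")
      case True
      then obtain a b where ab: "T j = a \<cdot>\<^sub>m 1\<^sub>m d + b \<cdot>\<^sub>m M" using T1 PM_char[OF M MM] by blast
      then show ?thesis by (intro exI[of _ "(a,b)"]) auto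
    next
      case False
      then show ?thesis by (intro exI[of _ "(0,0)"]) auto
    qed
  qed
  then obtain f where f: "\<And>j. (\<bar>j\<bar> < int n \<longrightarrow> T j = fst (f j) \<cdot>\<^sub>m 1\<^sub>m d + snd (f j) \<cdot>\<^sub>m M)"
    by metis
  have "X = block_toeplitz n d (\<lambda>j. fst (f j) \<cdot>\<^sub>m 1\<^sub>m d + snd (f j) \<cdot>\<^sub>m M)"
    unfolding X by (rule bt_cong) (use f in auto)
  then show "\<exists>\<alpha> \<beta>. X = block_toeplitz n d (\<lambda>j. \<alpha> j \<cdot>\<^sub>m 1\<^sub>m d + \<beta> j \<cdot>\<^sub>m M)"
    by (intro exI[of _ "\<lambda>j. fst (f j)"] exI[of _ "\<lambda>j. snd (f j)"])
next
  assume "\<exists>\<alpha> \<beta>. X = block_toeplitz n d (\<lambda>j. \<alpha> j \<cdot>\<^sub>m 1\<^sub>m d + \<beta> j \<cdot>\<^sub>m M)"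
  then obtain \<alpha> \<beta> where X: "X = block_toeplitz n d (\<lambda>j. \<alpha> j \<cdot>\<^sub>m 1\<^sub>m d + \<beta> j \<cdot>\<^sub>m M)" by blast
  have "\<forall>j::int. \<bar>j\<bar> < int n \<longrightarrow> (\<lambda>j. \<alpha> j \<cdot>\<^sub>m 1\<^sub>m d + \<beta> j \<cdot>\<^sub>m M) j \<in> carrier_mat d d \<and> (\<lambda>j. \<alpha> j \<cdot>\<^sub>m 1\<^sub>m d + \<beta> j \<cdot>\<^sub>m M) j \<in> poly_algebra M"
    using pm_carrier[OF M MM] PM_char[OF M MM] by auto
  then show "X \<in> toeplitz_set n d (poly_algebra M)" unfolding X toeplitz_set_def by blast
qed

lemma prodA:
  assumes a: "\<And>j. j \<noteq> 0 \<Longrightarrow> \<alpha> j = 0" and a': "\<And>j. j \<noteq> 0 \<Longrightarrow> \<alpha>' j = 0"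
  shows "block_toeplitz n d (\<lambda>j. \<alpha> j \<cdot>\<^sub>m 1\<^sub>m d + \<beta> j \<cdot>\<^sub>m M) * block_toeplitz n d (\<lambda>j. \<alpha>' j \<cdot>\<^sub>m 1\<^sub>m d + \<beta>' j \<cdot>\<^sub>m M)
    = block_toeplitz n d (\<lambda>j. (if j = 0 then \<alpha> 0 * \<alpha>' 0 else 0) \<cdot>\<^sub>m 1\<^sub>m d + (\<alpha> 0 * \<beta>' j + \<beta> j * \<alpha>' 0) \<cdot>\<^sub>m M)"
proof -
  have "block_toeplitz n d (\<lambda>j. \<alpha> j \<cdot>\<^sub>m 1\<^sub>m d + \<beta> j \<cdot>\<^sub>m M) * block_toeplitz n d (\<lambda>j. \<alpha>' j \<cdot>\<^sub>m 1\<^sub>m d + \<beta>' j \<cdot>\<^sub>m M)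
    = block_toeplitz n d (\<lambda>j. if j = 0 then (\<alpha> 0 \<cdot>\<^sub>m 1\<^sub>m d + \<beta> 0 \<cdot>\<^sub>m M) * (\<alpha>' 0 \<cdot>\<^sub>m 1\<^sub>m d + \<beta>' 0 \<cdot>\<^sub>m M)
       else (\<alpha> 0 \<cdot>\<^sub>m 1\<^sub>m d + \<beta> 0 \<cdot>\<^sub>m M) * (\<alpha>' j \<cdot>\<^sub>m 1\<^sub>m d + \<beta>' j \<cdot>\<^sub>m M) + (\<alpha> j \<cdot>\<^sub>m 1\<^sub>m d + \<beta> j \<cdot>\<^sub>m M) * (\<alpha>' 0 \<cdot>\<^sub>m 1\<^sub>m d + \<beta>' 0 \<cdot>\<^sub>m M))"
    by (rule bt_mult_special) (use pm_carrier[OF M MM] a a' in \<open>auto simp: pm_mult[OF M MM] pm_zero[OF M MM]\<close>)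
  also have "\<dots> = block_toeplitz n d (\<lambda>j. (if j = 0 then \<alpha> 0 * \<alpha>' 0 else 0) \<cdot>\<^sub>m 1\<^sub>m d + (\<alpha> 0 * \<beta>' j + \<beta> j * \<alpha>' 0) \<cdot>\<^sub>m M)"
    by (rule bt_cong) (use a a' in \<open>auto simp: pm_mult[OF M MM] pm_add[OF M MM]\<close>)
  finally show ?thesis .
qed

lemma E_car: "\<bar>j\<bar> < int n \<Longrightarrow> (if j = k then M else 0\<^sub>m d d) \<in> carrier_mat d d \<and> \<alpha> j \<cdot>\<^sub>m 1\<^sub>m d + \<beta> j \<cdot>\<^sub>m M \<in> carrier_mat d d"
  using M pm_carrier[OF M MM] by auto

lemma E_car': "\<bar>j\<bar> < int n \<Longrightarrow> \<alpha> j \<cdot>\<^sub>m 1\<^sub>m d + \<beta> j \<cdot>\<^sub>m M \<in> carrier_mat d d \<and> (if j = k then M else 0\<^sub>m d d) \<in> carrier_mat d d"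
  using M pm_carrier[OF M MM] by auto

lemma XE_entry:
  assumes i: "i < n*d" and l: "l < n*d"
  shows "(block_toeplitz n d (\<lambda>j. \<alpha> j \<cdot>\<^sub>m 1\<^sub>m d + \<beta> j \<cdot>\<^sub>m M) * block_toeplitz n d (\<lambda>j. if j = k then M else 0\<^sub>m d d)) $$ (i,l)
   = (if 0 \<le> int (l div d) + k \<and> int (l div d) + k < int n then \<alpha> (int (i div d) - int (l div d) - k) * M $$ (i mod d, l mod d) else 0)"
proof -
  have a: "i mod d < d" and b: "l mod d < d" using mod_lt[OF i] mod_lt[OF l] by auto
  have "(block_toeplitz n d (\<lambda>j. \<alpha> j \<cdot>\<^sub>m 1\<^sub>m d + \<beta> j \<cdot>\<^sub>m M) * block_toeplitz n d (\<lambda>j. if j = k then M else 0\<^sub>m d d)) $$ (i,l)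
    = (\<Sum>r<n. ((\<alpha> (int (i div d) - int r) \<cdot>\<^sub>m 1\<^sub>m d + \<beta> (int (i div d) - int r) \<cdot>\<^sub>m M) * (if int r - int (l div d) = k then M else 0\<^sub>m d d)) $$ (i mod d, l mod d))"
    by (rule bt_mult_index[OF E_car' i l])
  also have "\<dots> = (\<Sum>r<n. if int r = int (l div d) + k then \<alpha> (int (i div d) - int (l div d) - k) * M $$ (i mod d, l mod d) else 0)"
  proof (rule sum.cong[OF refl])
    fix r assume r: "r \<in> {..<n}"
    show "((\<alpha> (int (i div d) - int r) \<cdot>\<^sub>m 1\<^sub>m d + \<beta> (int (i div d) - int r) \<cdot>\<^sub>m M) * (if int r - int (l div d) = k then M else 0\<^sub>m d d)) $$ (i mod d, l mod d)
      = (if int r = int (l div d) + k then \<alpha> (int (i div d) - int (l div d) - k) * M $$ (i mod d, l mod d) else 0)"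
    proof (cases "int r = int (l div d) + k")
      case True
      then have e: "int (i div d) - int r = int (i div d) - int (l div d) - k" by simp
      show ?thesis using True a b M by (simp add: pm_multM[OF M MM] e algebra_simps)
    next
      case False
      then show ?thesis using a b by (simp add: right_mult_zero_mat[OF pm_carrier[OF M MM]])
    qed
  qed
  also have "\<dots> = (if 0 \<le> int (l div d) + k \<and> int (l div d) + k < int n then \<alpha> (int (i div d) - int (l div d) - k) * M $$ (i mod d, l mod d) else 0)"
    by (rule sum_delta_int)
  finally show ?thesis .
qed

lemma EX_entry:
  assumes i: "i < n*d" and l: "l < n*d"
  shows "(block_toeplitz n d (\<lambda>j. if j = k then M else 0\<^sub>m d d) * block_toeplitz n d (\<lambda>j. \<alpha> j \<cdot>\<^sub>m 1\<^sub>m d + \<beta> j \<cdot>\<^sub>m M)) $$ (i,l)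
   = (if 0 \<le> int (i div d) - k \<and> int (i div d) - k < int n then \<alpha> (int (i div d) - int (l div d) - k) * M $$ (i mod d, l mod d) else 0)"
proof -
  have a: "i mod d < d" and b: "l mod d < d" using mod_lt[OF i] mod_lt[OF l] by auto
  have "(block_toeplitz n d (\<lambda>j. if j = k then M else 0\<^sub>m d d) * block_toeplitz n d (\<lambda>j. \<alpha> j \<cdot>\<^sub>m 1\<^sub>m d + \<beta> j \<cdot>\<^sub>m M)) $$ (i,l)
    = (\<Sum>r<n. ((if int (i div d) - int r = k then M else 0\<^sub>m d d) * (\<alpha> (int r - int (l div d)) \<cdot>\<^sub>m 1\<^sub>m d + \<beta> (int r - int (l div d)) \<cdot>\<^sub>m M)) $$ (i mod d, l mod d))"
    by (rule bt_mult_index[OF E_car i l])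
  also have "\<dots> = (\<Sum>r<n. if int r = int (i div d) - k then \<alpha> (int (i div d) - int (l div d) - k) * M $$ (i mod d, l mod d) else 0)"
  proof (rule sum.cong[OF refl])
    fix r assume r: "r \<in> {..<n}"
    show "((if int (i div d) - int r = k then M else 0\<^sub>m d d) * (\<alpha> (int r - int (l div d)) \<cdot>\<^sub>m 1\<^sub>m d + \<beta> (int r - int (l div d)) \<cdot>\<^sub>m M)) $$ (i mod d, l mod d)
      = (if int r = int (i div d) - k then \<alpha> (int (i div d) - int (l div d) - k) * M $$ (i mod d, l mod d) else 0)"
    proof (cases "int r = int (i div d) - k")
      case True
      then have e: "int r - int (l div d) = int (i div d) - int (l div d) - k" by simp
      show ?thesis using True a b M by (simp add: Mpm_mult[OF M MM] e algebra_simps)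
    next
      case False
      then show ?thesis using a b by (simp add: left_mult_zero_mat[OF pm_carrier[OF M MM]])
    qed
  qed
  also have "\<dots> = (if 0 \<le> int (i div d) - k \<and> int (i div d) - k < int n then \<alpha> (int (i div d) - int (l div d) - k) * M $$ (i mod d, l mod d) else 0)"
    by (rule sum_delta_int)
  finally show ?thesis .
qed

end

lemma test_neg:
  fixes M :: "complex mat"
  assumes M: "M \<in> carrier_mat d d" and MM: "M * M = 0\<^sub>m d d" and M0: "M \<noteq> 0\<^sub>m d d"
   and a0: "a0 < d" and b0: "b0 < d" and Mab: "M $$ (a0,b0) \<noteq> 0" and n2: "2 \<le> n"
   and jneg: "j < 0" and jn: "\<bar>j\<bar> < int n"
   and XE: "block_toeplitz n d (\<lambda>j. \<alpha> j \<cdot>\<^sub>m 1\<^sub>m d + \<beta> j \<cdot>\<^sub>m M) * block_toeplitz n d (\<lambda>j'. if j' = -j then M else 0\<^sub>m d d)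
     = block_toeplitz n d (\<lambda>j'. if j' = -j then M else 0\<^sub>m d d) * block_toeplitz n d (\<lambda>j. \<alpha> j \<cdot>\<^sub>m 1\<^sub>m d + \<beta> j \<cdot>\<^sub>m M)"
  shows "\<alpha> j = 0"
proof -
          define i0 where "i0 = (n-1)*d + a0"
          define l0 where "l0 = (n-1)*d + b0"
          have i: "i0 < n*d" and l: "l0 < n*d" unfolding i0_def l0_def using blk[of "n-1" n a0] blk[of "n-1" n b0] a0 b0 n2 by auto
          have dv: "i0 div d = n-1" "l0 div d = n-1"
            "i0 mod d = a0" "l0 mod d = b0" unfolding i0_def l0_def using a0 b0 by auto
          have nn: "int (n-1) = int n - 1" using n2 by simp
          have c1: "\<not> (0 \<le> int n - 1 + - j \<and> int n - 1 + - j < int n)" using jneg by simp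
          have c2: "0 \<le> int n - 1 - - j \<and> int n - 1 - - j < int n" using jneg jn by simp
          have "(block_toeplitz n d (\<lambda>j. \<alpha> j \<cdot>\<^sub>m 1\<^sub>m d + \<beta> j \<cdot>\<^sub>m M) * block_toeplitz n d (\<lambda>j'. if j' = -j then M else 0\<^sub>m d d)) $$ (i0,l0) = 0"
            unfolding XE_entry[OF M MM M0 i l, of \<alpha> \<beta> "-j"] dv nn using c1 by (simp only: if_False)
          moreover have "(block_toeplitz n d (\<lambda>j'. if j' = -j then M else 0\<^sub>m d d) * block_toeplitz n d (\<lambda>j. \<alpha> j \<cdot>\<^sub>m 1\<^sub>m d + \<beta> j \<cdot>\<^sub>m M)) $$ (i0,l0) = \<alpha> j * M $$ (a0,b0)"
            unfolding EX_entry[OF M MM M0 i l, of "-j" \<alpha> \<beta>] dv nn using c2 by simp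
          ultimately show ?thesis using XE Mab by simp
qed


lemma test_pos:
  fixes M :: "complex mat"
  assumes M: "M \<in> carrier_mat d d" and MM: "M * M = 0\<^sub>m d d" and M0: "M \<noteq> 0\<^sub>m d d"
   and a0: "a0 < d" and b0: "b0 < d" and Mab: "M $$ (a0,b0) \<noteq> 0" and n2: "2 \<le> n"
   and jpos: "0 < j" and jn: "\<bar>j\<bar> < int n"
   and XE: "block_toeplitz n d (\<lambda>j. \<alpha> j \<cdot>\<^sub>m 1\<^sub>m d + \<beta> j \<cdot>\<^sub>m M) * block_toeplitz n d (\<lambda>j'. if j' = -j then M else 0\<^sub>m d d)
     = block_toeplitz n d (\<lambda>j'. if j' = -j then M else 0\<^sub>m d d) * block_toeplitz n d (\<lambda>j. \<alpha> j \<cdot>\<^sub>m 1\<^sub>m d + \<beta> j \<cdot>\<^sub>m M)"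
  shows "\<alpha> j = 0"
proof -
          define i0 where "i0 = a0"
          define l0 where "l0 = b0"
          have i: "i0 < n*d" and l: "l0 < n*d" unfolding i0_def l0_def using blk[of 0 n a0] blk[of 0 n b0] a0 b0 n2 by auto
          have dv: "i0 div d = 0" "l0 div d = 0"
            "i0 mod d = a0" "l0 mod d = b0" unfolding i0_def l0_def using a0 b0 by auto
          have nn: "int 0 = 0" by simp
          have c1: "\<not> (0 \<le> 0 + - j \<and> 0 + - j < int n)" using jpos by simp
          have c2: "0 \<le> 0 - - j \<and> 0 - - j < int n" using jpos jn by simp
          have "(block_toeplitz n d (\<lambda>j. \<alpha> j \<cdot>\<^sub>m 1\<^sub>m d + \<beta> j \<cdot>\<^sub>m M) * block_toeplitz n d (\<lambda>j'. if j' = -j then M else 0\<^sub>m d d)) $$ (i0,l0) = 0"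
            unfolding XE_entry[OF M MM M0 i l, of \<alpha> \<beta> "-j"] dv nn using c1 by (simp only: if_False)
          moreover have "(block_toeplitz n d (\<lambda>j'. if j' = -j then M else 0\<^sub>m d d) * block_toeplitz n d (\<lambda>j. \<alpha> j \<cdot>\<^sub>m 1\<^sub>m d + \<beta> j \<cdot>\<^sub>m M)) $$ (i0,l0) = \<alpha> j * M $$ (a0,b0)"
            unfolding EX_entry[OF M MM M0 i l, of "-j" \<alpha> \<beta>] dv nn using c2 by simp
          ultimately show ?thesis using XE Mab by simp
qed


theorem theorem7p3:
  fixes n d :: nat and M :: "complex mat"
  assumes "n \<ge> 2"
    and "M \<in> carrier_mat d d"
    and "nonderogatory M"
    and "M \<noteq> 0\<^sub>m d d"
    and "M * M = 0\<^sub>m d d"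
  defines "\<A> \<equiv> {block_toeplitz n d T | T.
             (\<forall>j::int. \<bar>j\<bar> < int n \<longrightarrow> T j \<in> carrier_mat d d \<and> T j \<in> poly_algebra M) \<and>
             (\<forall>j::int. \<bar>j\<bar> < int n \<and> j \<noteq> 0 \<longrightarrow> \<not> invertible_mat (T j))}"
  shows "comm_algebra_in (n * d) (toeplitz_set n d (poly_algebra M)) \<A>
    \<and> (\<forall>C. comm_algebra_in (n * d) (toeplitz_set n d (poly_algebra M)) C \<and> \<A> \<subseteq> C \<longrightarrow> C = \<A>)
    \<and> \<not> (\<exists>A B. A \<in> poly_algebra M \<and> B \<in> poly_algebra M \<and> \<A> = F_set n d (poly_algebra M) A B)"
proof -
  have M: "M \<in> carrier_mat d d" and MM: "M * M = 0\<^sub>m d d" and M0: "M \<noteq> 0\<^sub>m d d" using assms by auto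
  obtain a0 b0 where a0: "a0 < d" and b0: "b0 < d" and Mab: "M $$ (a0,b0) \<noteq> 0"
  proof -
    have "\<exists>a b. a < d \<and> b < d \<and> M $$ (a,b) \<noteq> 0"
    proof (rule ccontr)
      assume "\<not> ?thesis"
      then have "M = 0\<^sub>m d d" using M by (auto intro!: eq_matI)
      then show False using M0 by simp
    qed
    then show ?thesis using that by blast
  qed
  have d0: "0 < d" using a0 by simp
  have n2: "2 \<le> n" using assms(1) .
  have mA: "X \<in> \<A> \<longleftrightarrow> (\<exists>\<alpha> \<beta>. X = block_toeplitz n d (\<lambda>j. \<alpha> j \<cdot>\<^sub>m 1\<^sub>m d + \<beta> j \<cdot>\<^sub>m M) \<and> (\<forall>j. j \<noteq> 0 \<longrightarrow> \<alpha> j = 0))" for X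
    unfolding \<A>_def by (rule memA[OF M MM M0])
  have mT: "X \<in> toeplitz_set n d (poly_algebra M) \<longleftrightarrow> (\<exists>\<alpha> \<beta>. X = block_toeplitz n d (\<lambda>j. \<alpha> j \<cdot>\<^sub>m 1\<^sub>m d + \<beta> j \<cdot>\<^sub>m M))" for X
    by (rule memT[OF M MM M0])
  have mAI: "X \<in> \<A>" if "X = block_toeplitz n d (\<lambda>j. \<alpha> j \<cdot>\<^sub>m 1\<^sub>m d + \<beta> j \<cdot>\<^sub>m M)" "\<forall>j. j \<noteq> 0 \<longrightarrow> \<alpha> j = 0" for X \<alpha> \<beta>
    using that mA[of X] by blast
  have mAE: "P" if "X \<in> \<A>" "\<And>\<alpha> \<beta>. X = block_toeplitz n d (\<lambda>j. \<alpha> j \<cdot>\<^sub>m 1\<^sub>m d + \<beta> j \<cdot>\<^sub>m M) \<Longrightarrow> \<forall>j. j \<noteq> 0 \<longrightarrow> \<alpha> j = 0 \<Longrightarrow> P" for X P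
    using that mA[of X] by blast
  have mTI: "X \<in> toeplitz_set n d (poly_algebra M)" if "X = block_toeplitz n d (\<lambda>j. \<alpha> j \<cdot>\<^sub>m 1\<^sub>m d + \<beta> j \<cdot>\<^sub>m M)" for X \<alpha> \<beta>
    using that mT[of X] by blast
  have mTE: "P" if "X \<in> toeplitz_set n d (poly_algebra M)" "\<And>\<alpha> \<beta>. X = block_toeplitz n d (\<lambda>j. \<alpha> j \<cdot>\<^sub>m 1\<^sub>m d + \<beta> j \<cdot>\<^sub>m M) \<Longrightarrow> P" for X P
    using that mT[of X] by blast
  have pmc: "\<And>j. \<bar>j\<bar> < int n \<Longrightarrow> \<alpha> j \<cdot>\<^sub>m 1\<^sub>m d + \<beta> j \<cdot>\<^sub>m M \<in> carrier_mat d d" for \<alpha> \<beta> :: "int \<Rightarrow> complex"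
    using pm_carrier[OF M MM] by auto
  have sub: "\<A> \<subseteq> toeplitz_set n d (poly_algebra M)"
  proof
    fix X assume "X \<in> \<A>"
    then obtain \<alpha> \<beta> where "X = block_toeplitz n d (\<lambda>j. \<alpha> j \<cdot>\<^sub>m 1\<^sub>m d + \<beta> j \<cdot>\<^sub>m M)" by (rule mAE)
    then show "X \<in> toeplitz_set n d (poly_algebra M)" by (rule mTI)
  qed
  have zero: "0\<^sub>m (n * d) (n * d) \<in> \<A>"
  proof -
    have "0\<^sub>m (n * d) (n * d) = block_toeplitz n d (\<lambda>j. (\<lambda>_. 0) j \<cdot>\<^sub>m 1\<^sub>m d + (\<lambda>_. 0) j \<cdot>\<^sub>m M)"
      by (simp add: pm_zero[OF M MM] bt_zero)
    then show ?thesis by (rule mAI) simp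
  qed
  have closed: "X + Y \<in> \<A> \<and> X * Y \<in> \<A>" if X: "X \<in> \<A>" and Y: "Y \<in> \<A>" for X Y
  proof -
    obtain \<alpha> \<beta> where Xe: "X = block_toeplitz n d (\<lambda>j. \<alpha> j \<cdot>\<^sub>m 1\<^sub>m d + \<beta> j \<cdot>\<^sub>m M)" and a: "\<forall>j. j \<noteq> 0 \<longrightarrow> \<alpha> j = 0"
      using X by (rule mAE)
    obtain \<alpha>' \<beta>' where Ye: "Y = block_toeplitz n d (\<lambda>j. \<alpha>' j \<cdot>\<^sub>m 1\<^sub>m d + \<beta>' j \<cdot>\<^sub>m M)" and a': "\<forall>j. j \<noteq> 0 \<longrightarrow> \<alpha>' j = 0"
      using Y by (rule mAE)
    have "X + Y = block_toeplitz n d (\<lambda>j. (\<alpha> j \<cdot>\<^sub>m 1\<^sub>m d + \<beta> j \<cdot>\<^sub>m M) + (\<alpha>' j \<cdot>\<^sub>m 1\<^sub>m d + \<beta>' j \<cdot>\<^sub>m M))"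
      unfolding Xe Ye by (rule bt_add) (use pmc in auto)
    also have "\<dots> = block_toeplitz n d (\<lambda>j. (\<lambda>j. \<alpha> j + \<alpha>' j) j \<cdot>\<^sub>m 1\<^sub>m d + (\<lambda>j. \<beta> j + \<beta>' j) j \<cdot>\<^sub>m M)"
      by (simp add: pm_add[OF M MM])
    finally have s: "X + Y \<in> \<A>" by (rule mAI) (use a a' in auto)
    have "X * Y = block_toeplitz n d (\<lambda>j. (if j = 0 then \<alpha> 0 * \<alpha>' 0 else 0) \<cdot>\<^sub>m 1\<^sub>m d + (\<alpha> 0 * \<beta>' j + \<beta> j * \<alpha>' 0) \<cdot>\<^sub>m M)"
      unfolding Xe Ye by (rule prodA[OF M MM M0]) (use a a' in auto)
    then have "X * Y \<in> \<A>" by (rule mAI) (use a in auto)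
    with s show ?thesis by blast
  qed
  have smult: "c \<cdot>\<^sub>m X \<in> \<A>" if X: "X \<in> \<A>" for X c
  proof -
    obtain \<alpha> \<beta> where Xe: "X = block_toeplitz n d (\<lambda>j. \<alpha> j \<cdot>\<^sub>m 1\<^sub>m d + \<beta> j \<cdot>\<^sub>m M)" and a: "\<forall>j. j \<noteq> 0 \<longrightarrow> \<alpha> j = 0"
      using X by (rule mAE)
    have "c \<cdot>\<^sub>m X = block_toeplitz n d (\<lambda>j. c \<cdot>\<^sub>m (\<alpha> j \<cdot>\<^sub>m 1\<^sub>m d + \<beta> j \<cdot>\<^sub>m M))"
      unfolding Xe by (rule bt_smult) (use pmc in auto)
    also have "\<dots> = block_toeplitz n d (\<lambda>j. (\<lambda>j. c * \<alpha> j) j \<cdot>\<^sub>m 1\<^sub>m d + (\<lambda>j. c * \<beta> j) j \<cdot>\<^sub>m M)"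
      by (simp add: pm_smult[OF M MM])
    finally show ?thesis by (rule mAI) (use a in auto)
  qed
  have comm: "X * Y = Y * X" if X: "X \<in> \<A>" and Y: "Y \<in> \<A>" for X Y
  proof -
    obtain \<alpha> \<beta> where Xe: "X = block_toeplitz n d (\<lambda>j. \<alpha> j \<cdot>\<^sub>m 1\<^sub>m d + \<beta> j \<cdot>\<^sub>m M)" and a: "\<forall>j. j \<noteq> 0 \<longrightarrow> \<alpha> j = 0"
      using X by (rule mAE)
    obtain \<alpha>' \<beta>' where Ye: "Y = block_toeplitz n d (\<lambda>j. \<alpha>' j \<cdot>\<^sub>m 1\<^sub>m d + \<beta>' j \<cdot>\<^sub>m M)" and a': "\<forall>j. j \<noteq> 0 \<longrightarrow> \<alpha>' j = 0"
      using Y by (rule mAE)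
    have e1: "(if j = 0 then \<alpha> 0 * \<alpha>' 0 else 0) = (if j = 0 then \<alpha>' 0 * \<alpha> 0 else (0::complex))" for j :: int
      by (simp add: ac_simps)
    have e2: "\<alpha> 0 * \<beta>' j + \<beta> j * \<alpha>' 0 = \<alpha>' 0 * \<beta> j + \<beta>' j * \<alpha> 0" for j :: int
      by (simp add: ac_simps)
    have "X * Y = block_toeplitz n d (\<lambda>j. (if j = 0 then \<alpha> 0 * \<alpha>' 0 else 0) \<cdot>\<^sub>m 1\<^sub>m d + (\<alpha> 0 * \<beta>' j + \<beta> j * \<alpha>' 0) \<cdot>\<^sub>m M)"
      unfolding Xe Ye by (rule prodA[OF M MM M0]) (use a a' in auto)
    also have "\<dots> = block_toeplitz n d (\<lambda>j. (if j = 0 then \<alpha>' 0 * \<alpha> 0 else 0) \<cdot>\<^sub>m 1\<^sub>m d + (\<alpha>' 0 * \<beta> j + \<beta>' j * \<alpha> 0) \<cdot>\<^sub>m M)"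
      by (simp only: e1 e2)
    also have "\<dots> = Y * X"
      unfolding Xe Ye by (rule prodA[OF M MM M0, symmetric]) (use a a' in auto)
    finally show ?thesis .
  qed
  have P1: "comm_algebra_in (n * d) (toeplitz_set n d (poly_algebra M)) \<A>"
    unfolding comm_algebra_in_def algebra_in_def using sub zero closed smult comm by blast
  have P2: "C = \<A>" if C: "comm_algebra_in (n * d) (toeplitz_set n d (poly_algebra M)) C" and AC: "\<A> \<subseteq> C" for C
  proof
    show "C \<subseteq> \<A>"
    proof
      fix X assume XC: "X \<in> C"
      then have "X \<in> toeplitz_set n d (poly_algebra M)" using C unfolding comm_algebra_in_def algebra_in_def by blast
      then obtain \<alpha> \<beta> where Xe: "X = block_toeplitz n d (\<lambda>j. \<alpha> j \<cdot>\<^sub>m 1\<^sub>m d + \<beta> j \<cdot>\<^sub>m M)" by (rule mTE)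
      have az: "\<alpha> j = 0" if j0: "j \<noteq> 0" and jn: "\<bar>j\<bar> < int n" for j
      proof -
        define E where "E = block_toeplitz n d (\<lambda>j'. if j' = -j then M else 0\<^sub>m d d)"
        have "E = block_toeplitz n d (\<lambda>j'. (\<lambda>_. 0) j' \<cdot>\<^sub>m 1\<^sub>m d + (\<lambda>j'. if j' = -j then 1 else 0) j' \<cdot>\<^sub>m M)"
          unfolding E_def by (rule bt_cong) (simp add: pm_M[OF M MM] pm_zero[OF M MM])
        then have "E \<in> \<A>" by (rule mAI) simp
        then have "E \<in> C" using AC by blast
        then have XE: "X * E = E * X" using XC C unfolding comm_algebra_in_def by blast
        show ?thesis
        proof (cases "j > 0")
          case True
          show ?thesis by (rule test_pos[OF M MM M0 a0 b0 Mab n2 True jn XE[unfolded Xe E_def]])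
        next
          case False
          then have jneg: "j < 0" using j0 by simp
          show ?thesis by (rule test_neg[OF M MM M0 a0 b0 Mab n2 jneg jn XE[unfolded Xe E_def]])
        qed
      qed
      have "X = block_toeplitz n d (\<lambda>j. (\<lambda>j. if j = 0 then \<alpha> 0 else 0) j \<cdot>\<^sub>m 1\<^sub>m d + \<beta> j \<cdot>\<^sub>m M)"
        unfolding Xe by (rule bt_cong) (use az in auto)
      then show "X \<in> \<A>" by (rule mAI) simp
    qed
  qed (use that in auto)
  have P3: False if "A \<in> poly_algebra M" "B \<in> poly_algebra M" "\<A> = F_set n d (poly_algebra M) A B" for A B
  proof -
    have "\<exists>a b. A = a \<cdot>\<^sub>m 1\<^sub>m d + b \<cdot>\<^sub>m M" using that(1) by (simp add: PM_char[OF M MM])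
    then obtain a1 b1 where A: "A = a1 \<cdot>\<^sub>m 1\<^sub>m d + b1 \<cdot>\<^sub>m M" by blast
    have "\<exists>a b. B = a \<cdot>\<^sub>m 1\<^sub>m d + b \<cdot>\<^sub>m M" using that(2) by (simp add: PM_char[OF M MM])
    then obtain a2 b2 where B: "B = a2 \<cdot>\<^sub>m 1\<^sub>m d + b2 \<cdot>\<^sub>m M" by blast
    have r1: "\<bar>1::int\<bar> < int n" and r2: "\<bar>1 - int n\<bar> < int n" and ne: "(1::int) \<noteq> 1 - int n" using n2 by auto
    have Zin: "block_toeplitz n d (\<lambda>j. (\<lambda>_. 0) j \<cdot>\<^sub>m 1\<^sub>m d + (\<lambda>j. if j = k then 1 else 0) j \<cdot>\<^sub>m M) \<in> F_set n d (poly_algebra M) A B" for k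
    proof -
      have "block_toeplitz n d (\<lambda>j. (\<lambda>_. 0) j \<cdot>\<^sub>m 1\<^sub>m d + (\<lambda>j. if j = k then 1 else 0) j \<cdot>\<^sub>m M) \<in> \<A>"
        by (rule mAI[OF refl]) simp
      then show ?thesis using that(3) by simp
    qed
    have key: "A * ((if 1 = k then 1 else 0) \<cdot>\<^sub>m M) = B * ((if 1 - int n = k then 1 else 0) \<cdot>\<^sub>m M)" for k
    proof -
      obtain T where Te: "block_toeplitz n d (\<lambda>j. (\<lambda>_. 0) j \<cdot>\<^sub>m 1\<^sub>m d + (\<lambda>j. if j = k then 1 else 0) j \<cdot>\<^sub>m M) = block_toeplitz n d T"
        and Tc: "\<forall>j::int. \<bar>j\<bar> < int n \<longrightarrow> T j \<in> carrier_mat d d \<and> T j \<in> poly_algebra M"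
        and Tr: "\<forall>j::int. 1 \<le> j \<and> j \<le> int n - 1 \<longrightarrow> A * T j = B * T (j - int n)"
      proof -
        have "\<exists>T. block_toeplitz n d (\<lambda>j. (\<lambda>_. 0) j \<cdot>\<^sub>m 1\<^sub>m d + (\<lambda>j. if j = k then 1 else 0) j \<cdot>\<^sub>m M) = block_toeplitz n d T \<and>
          (\<forall>j::int. \<bar>j\<bar> < int n \<longrightarrow> T j \<in> carrier_mat d d \<and> T j \<in> poly_algebra M) \<and>
          (\<forall>j::int. 1 \<le> j \<and> j \<le> int n - 1 \<longrightarrow> A * T j = B * T (j - int n))"
          using Zin[of k] unfolding F_set_def by (simp only: mem_Collect_eq)
        then show ?thesis using that by (elim exE conjE) 
      qed
      have T1: "T 1 = 0 \<cdot>\<^sub>m 1\<^sub>m d + (if 1 = k then 1 else 0) \<cdot>\<^sub>m M"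
        using bt_inj[OF d0 Te pm_carrier[OF M MM] _ r1] Tc r1 by simp
      have T2: "T (1 - int n) = 0 \<cdot>\<^sub>m 1\<^sub>m d + (if 1 - int n = k then 1 else 0) \<cdot>\<^sub>m M"
        using bt_inj[OF d0 Te pm_carrier[OF M MM] _ r2] Tc r2 by simp
      have "A * T 1 = B * T (1 - int n)" using Tr n2 by auto
      moreover have "0 \<cdot>\<^sub>m 1\<^sub>m d + x \<cdot>\<^sub>m M = x \<cdot>\<^sub>m M" for x using M by (auto intro!: eq_matI)
      ultimately show ?thesis using T1 T2 by simp
    qed
    have sM: "1 \<cdot>\<^sub>m M = M" "0 \<cdot>\<^sub>m M = 0\<^sub>m d d" using M by (auto intro!: eq_matI)
    have "A * M = B * 0\<^sub>m d d" using key[of 1] ne sM by simp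
    then have "a1 \<cdot>\<^sub>m M = 0\<^sub>m d d" unfolding A B
      by (simp only: pm_multM[OF M MM] right_mult_zero_mat[OF pm_carrier[OF M MM]])
    then have "(a1 \<cdot>\<^sub>m M) $$ (a0,b0) = 0" using a0 b0 by simp
    then have a1: "a1 = 0" using Mab a0 b0 M by simp
    have "A * 0\<^sub>m d d = B * M" using key[of "1 - int n"] ne sM by simp
    then have "a2 \<cdot>\<^sub>m M = 0\<^sub>m d d" unfolding A B
      by (simp only: pm_multM[OF M MM] right_mult_zero_mat[OF pm_carrier[OF M MM]])
    then have "(a2 \<cdot>\<^sub>m M) $$ (a0,b0) = 0" using a0 b0 by simp
    then have a2: "a2 = 0" using Mab a0 b0 M by simp
    obtain c e where ce: "b1 * c = b2 * e" and cne: "c \<noteq> 0 \<or> e \<noteq> 0"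
    proof (cases "b1 = 0 \<and> b2 = 0")
      case True
      then show ?thesis using that[of 1 0] by simp
    next
      case False
      then show ?thesis using that[of b2 b1] by (auto simp: mult.commute)
    qed
    define \<gamma> where "\<gamma> j = (if j = 1 then c else if j = 1 - int n then e else 0)" for j :: int
    define W where "W = block_toeplitz n d (\<lambda>j. \<gamma> j \<cdot>\<^sub>m 1\<^sub>m d + (\<lambda>_. 0) j \<cdot>\<^sub>m M)"
    have "W \<in> F_set n d (poly_algebra M) A B"
    proof -
      have "\<forall>j::int. \<bar>j\<bar> < int n \<longrightarrow> (\<lambda>j. \<gamma> j \<cdot>\<^sub>m 1\<^sub>m d + (\<lambda>_. 0) j \<cdot>\<^sub>m M) j \<in> carrier_mat d d \<and> (\<lambda>j. \<gamma> j \<cdot>\<^sub>m 1\<^sub>m d + (\<lambda>_. 0) j \<cdot>\<^sub>m M) j \<in> poly_algebra M"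
        using pm_carrier[OF M MM] PM_char[OF M MM] by auto
      moreover have "\<forall>j::int. 1 \<le> j \<and> j \<le> int n - 1 \<longrightarrow> A * (\<lambda>j. \<gamma> j \<cdot>\<^sub>m 1\<^sub>m d + (\<lambda>_. 0) j \<cdot>\<^sub>m M) j = B * (\<lambda>j. \<gamma> j \<cdot>\<^sub>m 1\<^sub>m d + (\<lambda>_. 0) j \<cdot>\<^sub>m M) (j - int n)"
      proof (intro allI impI)
        fix j :: int assume j: "1 \<le> j \<and> j \<le> int n - 1"
        have g1: "\<gamma> j = (if j = 1 then c else 0)" and g2: "\<gamma> (j - int n) = (if j = 1 then e else 0)"
          unfolding \<gamma>_def using j by auto
        show "A * (\<lambda>j. \<gamma> j \<cdot>\<^sub>m 1\<^sub>m d + (\<lambda>_. 0) j \<cdot>\<^sub>m M) j = B * (\<lambda>j. \<gamma> j \<cdot>\<^sub>m 1\<^sub>m d + (\<lambda>_. 0) j \<cdot>\<^sub>m M) (j - int n)"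
          unfolding A B a1 a2 using ce by (simp add: g1 g2 pm_mult[OF M MM] mult.commute)
      qed
      ultimately show ?thesis unfolding F_set_def W_def
        by (intro CollectI exI[of _ "\<lambda>j. \<gamma> j \<cdot>\<^sub>m 1\<^sub>m d + (\<lambda>_. 0) j \<cdot>\<^sub>m M"] conjI refl)
    qed
    then have "W \<in> \<A>" using that(3) by simp
    then obtain \<alpha> \<beta> where We: "W = block_toeplitz n d (\<lambda>j. \<alpha> j \<cdot>\<^sub>m 1\<^sub>m d + \<beta> j \<cdot>\<^sub>m M)" and a: "\<forall>j. j \<noteq> 0 \<longrightarrow> \<alpha> j = 0"
      by (rule mAE)
    have We': "block_toeplitz n d (\<lambda>j. \<gamma> j \<cdot>\<^sub>m 1\<^sub>m d + (\<lambda>_. 0) j \<cdot>\<^sub>m M) = block_toeplitz n d (\<lambda>j. \<alpha> j \<cdot>\<^sub>m 1\<^sub>m d + \<beta> j \<cdot>\<^sub>m M)"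
      using We unfolding W_def .
    have e1: "\<gamma> 1 \<cdot>\<^sub>m 1\<^sub>m d + 0 \<cdot>\<^sub>m M = \<alpha> 1 \<cdot>\<^sub>m 1\<^sub>m d + \<beta> 1 \<cdot>\<^sub>m M"
      using bt_inj[OF d0 We' pm_carrier[OF M MM] pm_carrier[OF M MM] r1] by simp
    have e2: "\<gamma> (1 - int n) \<cdot>\<^sub>m 1\<^sub>m d + 0 \<cdot>\<^sub>m M = \<alpha> (1 - int n) \<cdot>\<^sub>m 1\<^sub>m d + \<beta> (1 - int n) \<cdot>\<^sub>m M"
      using bt_inj[OF d0 We' pm_carrier[OF M MM] pm_carrier[OF M MM] r2] by simp
    have ni1: "\<not> invertible_mat (\<alpha> 1 \<cdot>\<^sub>m 1\<^sub>m d + \<beta> 1 \<cdot>\<^sub>m M)"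
      using pm_invertible[OF M MM M0, of "\<alpha> 1" "\<beta> 1"] a by simp
    have ni2: "\<not> invertible_mat (\<alpha> (1 - int n) \<cdot>\<^sub>m 1\<^sub>m d + \<beta> (1 - int n) \<cdot>\<^sub>m M)"
      using pm_invertible[OF M MM M0, of "\<alpha> (1 - int n)" "\<beta> (1 - int n)"] a n2 by simp
    have "\<not> invertible_mat (\<gamma> 1 \<cdot>\<^sub>m 1\<^sub>m d + 0 \<cdot>\<^sub>m M)" using ni1 e1 by simp
    then have g1: "\<gamma> 1 = 0" using pm_invertible[OF M MM M0, of "\<gamma> 1" 0] by simp
    have "\<not> invertible_mat (\<gamma> (1 - int n) \<cdot>\<^sub>m 1\<^sub>m d + 0 \<cdot>\<^sub>m M)" using ni2 e2 by simp
    then have g2: "\<gamma> (1 - int n) = 0" using pm_invertible[OF M MM M0, of "\<gamma> (1 - int n)" 0] by simp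
    show False using g1 g2 cne ne unfolding \<gamma>_def by (auto split: if_splits)
  qed
  show ?thesis using P1 P2 P3 by blast
qed

end
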